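(* For all words $a,b,u,v\in\{m_1,\dots,m_{k+1}\}^*$, we have $aub\sim avb$ if and only if $u\sim v$.
   Context: Fix $k\ge 0$. A system of $k$ stacks in series consists of an input queue, stacks $1,\dots,k$, and an output queue. A state records the contents of each stack and each queue (finitely many distinct labelled elements); there is one additional "illegal" state $\varnothing$; $\mathcal S_k$ denotes the set of all states including $\varnothing$. The moves are $m_1,\dots,m_{k+1}$: $m_i$ ($1\le i\le k$) pushes an element onto stack $i$, taking it from the front of the input queue if $i=1$ and popping it from the top of stack $i-1$ if $i>1$; $m_{k+1}$ pops the top of stack $k$ and enqueues it at the back of the output queue. For a word $w$ and state $s$, $w\ast s$ is obtained by applying the moves of $w$ left to right, with $w\ast s=\varnothing$ if some move is illegal and $w\ast\varnothing=\varnothing$. For words $x,y$ define $x\sim y$ iff $x\ast s=y\ast s$ for all $s\in\mathcal S_k$. *)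

theory Defs
  imports Main
begin

text \<open>A legal state of k stacks in series: (input queue, stacks 1..k, output queue).
  The input queue is a list whose head is its front; stack j (1-based) is the list
  at index j-1, whose head is its top; the output queue is a list whose last element
  is its back.
  The illegal state is None.\<close>

type_synonym sstate = "(nat list \<times> nat list list \<times> nat list) option"

definition states :: "nat \<Rightarrow> sstate set" where
  "states k = {None} \<union>
     {Some (inp, ss, out) | inp ss out. length ss = k \<and> distinct (inp @ concat ss @ out)}"

text \<open>Move m_i: take an element from the input queue (i = 1) or pop it from stack i-1
  (i > 1), then push it onto stack i (i \<le> k) or enqueue it on the output queue (i = k+1).\<close>

fun move :: "nat \<Rightarrow> nat \<Rightarrow> sstate \<Rightarrow> sstate" where
  "move k i None = None"
| "move k i (Some (inp, ss, out)) =
     (if i < 1 \<or> k + 1 < i then None else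
      (let src = (if i = 1 then (case inp of [] \<Rightarrow> None | x # r \<Rightarrow> Some (x, r, ss, out))
                  else (case ss ! (i - 2) of [] \<Rightarrow> None
                        | x # r \<Rightarrow> Some (x, inp, ss[i - 2 := r], out)))
       in case src of None \<Rightarrow> None
          | Some (x, inp', ss', out') \<Rightarrow>
              (if i = k + 1 then Some (inp', ss', out' @ [x])
               else Some (inp', ss'[i - 1 := x # ss' ! (i - 1)], out'))))"

fun act :: "nat \<Rightarrow> nat list \<Rightarrow> sstate \<Rightarrow> sstate" where
  "act k [] s = s"
| "act k (m # w) s = act k w (move k m s)"

definition equiv_words :: "nat \<Rightarrow> nat list \<Rightarrow> nat list \<Rightarrow> bool" where
  "equiv_words k x y \<longleftrightarrow> (\<forall>s \<in> states k. act k x s = act k y s)"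

end

theory Submission imports Defs "HOL-Library.Multiset" begin

definition stepL :: "nat \<Rightarrow> nat list list \<Rightarrow> nat list list option" where
 "stepL i L = (if i < 1 \<or> length L \<le> i then None else
    (case L!(i-1) of [] \<Rightarrow> None | x#r \<Rightarrow> Some (L[i-1 := r, i := x # (L!i)])))"

fun runL :: "nat list \<Rightarrow> nat list list \<Rightarrow> nat list list option" where
  "runL [] L = Some L"
| "runL (i#w) L = (case stepL i L of None \<Rightarrow> None | Some M \<Rightarrow> runL w M)"

lemma stepL_SomeE:
  assumes "stepL i L = Some M"
  obtains x r where "1 \<le> i" "i < length L" "L!(i-1) = x#r" "M = L[i-1 := r, i := x # (L!i)]"
  using assms unfolding stepL_def by (auto split: if_splits list.splits)

lemma step_length: "stepL i L = Some M \<Longrightarrow> length M = length L"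
  by (erule stepL_SomeE) auto

lemma run_length: "runL w L = Some M \<Longrightarrow> length M = length L"
  by (induction w arbitrary: L) (auto split: option.splits dest: step_length)

lemma mset_concat_update:
  "j < length xs \<Longrightarrow> mset (concat (xs[j:=y])) + mset (xs!j) = mset (concat xs) + mset y"
  by (induction xs arbitrary: j) (auto split: nat.splits simp: ac_simps)

lemma step_mset: "stepL i L = Some M \<Longrightarrow> mset (concat M) = mset (concat L)"
proof (erule stepL_SomeE)
  fix x r assume h: "1 \<le> i" "i < length L" "L!(i-1) = x#r" "M = L[i-1 := r, i := x # (L!i)]"
  have a: "mset (concat (L[i-1:=r])) + mset (x#r) = mset (concat L) + mset r"
    using mset_concat_update[of "i-1" L r] h by simp
  have b: "mset (concat M) + mset (L!i) = mset (concat (L[i-1:=r])) + mset (x # L!i)"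
    using mset_concat_update[of i "L[i-1:=r]" "x # L!i"] h by simp
  from a b show ?thesis by (simp add: ac_simps)
qed

lemma run_mset: "runL w L = Some M \<Longrightarrow> mset (concat M) = mset (concat L)"
  by (induction w arbitrary: L) (auto split: option.splits dest: step_mset)

lemma run_append: "runL (x@y) L = (case runL x L of None \<Rightarrow> None | Some M \<Rightarrow> runL y M)"
  by (induction x arbitrary: L) (auto split: option.splits)

lemma step_inv: "stepL i L = Some M \<Longrightarrow> L = M[i := tl(M!i), i-1 := hd (M!i) # (M!(i-1))]"
proof (erule stepL_SomeE)
  fix x r assume h: "1 \<le> i" "i < length L" "L!(i-1) = x#r" "M = L[i-1 := r, i := x # (L!i)]"
  show ?thesis
    by (rule nth_equalityI) (use h in \<open>auto simp: nth_list_update\<close>)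
qed

lemma step_inj: "stepL i L1 = Some M \<Longrightarrow> stepL i L2 = Some M \<Longrightarrow> L1 = L2"
  using step_inv by metis

lemma run_inj: "runL w L1 = Some M \<Longrightarrow> runL w L2 = Some M \<Longrightarrow> L1 = L2"
proof (induction w arbitrary: L1 L2)
  case (Cons i w)
  then show ?case by (auto split: option.splits dest: step_inj)
qed simp

definition padL :: "nat list list \<Rightarrow> nat list list \<Rightarrow> nat list list" where
  "padL P L = map (\<lambda>(x,y). x @ y) (zip L P)"

lemma padL_length[simp]: "length P = length L \<Longrightarrow> length (padL P L) = length L"
  by (simp add: padL_def)

lemma padL_nth[simp]: "length P = length L \<Longrightarrow> j < length L \<Longrightarrow> padL P L ! j = L!j @ P!j"
  by (simp add: padL_def)

lemma step_pad: "length P = length L \<Longrightarrow> stepL i L = Some M \<Longrightarrow> stepL i (padL P L) = Some (padL P M)"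
proof (erule stepL_SomeE)
  fix x r assume P: "length P = length L" and h: "1 \<le> i" "i < length L" "L!(i-1) = x#r" "M = L[i-1 := r, i := x # (L!i)]"
  have "(padL P L)[i-1 := r @ P!(i-1), i := x # ((padL P L)!i)] = padL P M"
    by (rule nth_equalityI) (use h P in \<open>auto simp: nth_list_update\<close>)
  then show ?thesis using h P by (simp add: stepL_def)
qed

lemma run_pad: "length P = length L \<Longrightarrow> runL w L = Some M \<Longrightarrow> runL w (padL P L) = Some (padL P M)"
proof (induction w arbitrary: L)
  case (Cons i w)
  then obtain M1 where m1: "stepL i L = Some M1" "runL w M1 = Some M" by (auto split: option.splits)
  have "length P = length M1" using Cons.prems step_length[OF m1(1)] by simp
  then show ?case using Cons.IH m1 step_pad[OF Cons.prems(1) m1(1)] by simp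
qed simp

lemma pad_inj: "length P = length L \<Longrightarrow> length L' = length L \<Longrightarrow> padL P L = padL P L' \<Longrightarrow> L = L'"
proof (rule nth_equalityI)
  fix j assume "length P = length L" "length L' = length L" "padL P L = padL P L'" "j < length L"
  then show "L!j = L'!j" by (metis append_same_eq padL_nth)
qed simp

lemma mset_pad: "length P = length L \<Longrightarrow> mset (concat (padL P L)) = mset (concat L) + mset (concat P)"
  by (induction L arbitrary: P) (auto simp: padL_def length_Suc_conv ac_simps)


lemma step_depth:
  assumes "\<forall>j<length L. Suc n \<le> length (L!j)" "1 \<le> i" "i < length L"
  shows "\<exists>M. stepL i L = Some M \<and> (\<forall>j<length M. n \<le> length (M!j))"
proof -
  obtain x r where xr: "L!(i-1) = x#r" using assms
    by (metis Suc_le_length_iff le_less_trans less_imp_diff_less)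
  let ?M = "L[i-1 := r, i := x # (L!i)]"
  have "stepL i L = Some ?M" using assms xr by (simp add: stepL_def)
  moreover have "\<forall>j<length ?M. n \<le> length (?M!j)"
    using assms xr by (auto simp: nth_list_update)
  ultimately show ?thesis by blast
qed

lemma run_depth:
  "\<forall>j<length L. n \<le> length (L!j) \<Longrightarrow> length w \<le> n \<Longrightarrow> set w \<subseteq> {1..<length L} \<Longrightarrow> runL w L \<noteq> None"
proof (induction w arbitrary: L n)
  case (Cons i w)
  then obtain n' where n: "n = Suc n'" by (cases n) auto
  from Cons.prems n obtain M where M: "stepL i L = Some M" "\<forall>j<length M. n' \<le> length (M!j)"
    using step_depth[of L n' i] by auto
  have "runL w M \<noteq> None"
    using Cons.IH[OF M(2)] Cons.prems n step_length[OF M(1)] by auto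
  then show ?case using M by simp
qed simp

lemma step_undo:
  assumes "\<forall>j<length L. 1 \<le> j \<longrightarrow> Suc n \<le> length (L!j)" "1 \<le> i" "i < length L"
  shows "\<exists>L0. stepL i L0 = Some L \<and> length L0 = length L \<and> (\<forall>j<length L0. 1 \<le> j \<longrightarrow> n \<le> length (L0!j))"
proof -
  obtain x r where xr: "L!i = x#r" using assms
    by (metis Suc_le_length_iff)
  let ?L0 = "L[i := r, i-1 := x # (L!(i-1))]"
  have "?L0 ! (i-1) = x # (L!(i-1))" using assms by simp
  moreover have "?L0 [i-1 := L!(i-1), i := x # (?L0!i)] = L"
    by (rule nth_equalityI) (use assms xr in \<open>auto simp: nth_list_update\<close>)
  ultimately have "stepL i ?L0 = Some L" using assms by (simp add: stepL_def)
  moreover have "\<forall>j<length ?L0. 1 \<le> j \<longrightarrow> n \<le> length (?L0!j)"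
    using assms xr by (auto simp: nth_list_update)
  ultimately show ?thesis by auto
qed

lemma run_undo:
  "\<forall>j<length L. 1 \<le> j \<longrightarrow> n \<le> length (L!j) \<Longrightarrow> length a \<le> n \<Longrightarrow> set a \<subseteq> {1..<length L}
   \<Longrightarrow> \<exists>L0. runL a L0 = Some L"
proof (induction a arbitrary: L n rule: rev_induct)
  case Nil then show ?case by auto
next
  case (snoc i a)
  then obtain n' where n: "n = Suc n'" by (cases n) auto
  from snoc.prems n obtain L1 where L1: "stepL i L1 = Some L" "length L1 = length L"
     "\<forall>j<length L1. 1 \<le> j \<longrightarrow> n' \<le> length (L1!j)"
    using step_undo[of L n' i] by auto
  obtain L0 where "runL a L0 = Some L1"
    using snoc.IH[OF L1(3)] snoc.prems n L1(2) by auto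
  then have "runL (a @ [i]) L0 = Some L" using L1 by (simp add: run_append)
  then show ?case by blast
qed

lemma run_first_fail:
  "runL w L = None \<Longrightarrow> \<exists>w1 i w2 X. w = w1 @ i # w2 \<and> runL w1 L = Some X \<and> stepL i X = None"
proof (induction w arbitrary: L)
  case (Cons i w)
  show ?case
  proof (cases "stepL i L")
    case None then show ?thesis by (intro exI[of _ "[]"]) auto
  next
    case (Some M)
    then have "runL w M = None" using Cons.prems by simp
    then obtain w1 j w2 X where "w = w1 @ j # w2" "runL w1 M = Some X" "stepL j X = None"
      using Cons.IH by blast
    then show ?thesis using Some by (intro exI[of _ "i#w1"]) auto
  qed
qed simp

definition lowm :: "nat \<Rightarrow> nat list list \<Rightarrow> nat multiset" where
  "lowm l L = mset (concat (take l L))"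

lemma lowm_sub: "lowm l L \<subseteq># mset (concat L)"
proof -
  have "concat L = concat (take l L) @ concat (drop l L)"
    by (metis append_take_drop_id concat_append)
  then show ?thesis unfolding lowm_def by (metis mset_append mset_subset_eq_add_left)
qed

lemma step_lowm:
  assumes "stepL i L = Some M"
  shows "lowm l M \<subseteq># lowm l L \<and> (l = i \<longrightarrow> lowm l L = lowm l M + {# hd (L!(i-1)) #})"
proof (rule stepL_SomeE[OF assms])
  fix x r assume h: "1 \<le> i" "i < length L" "L!(i-1) = x#r" "M = L[i-1 := r, i := x # (L!i)]"
  have tM: "take l M = (take l L)[i-1 := r, i := x # (L!i)]" using h by (simp add: take_update_swap)
  show ?thesis
  proof (cases "l \<le> i - 1")
    case True
    then show ?thesis using h unfolding lowm_def by (simp add: tM list_update_beyond)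
  next
    case False
    then have l1: "i - 1 < length (take l L)" using h by simp
    have a: "mset (concat ((take l L)[i-1:=r])) + mset (x#r) = mset (concat (take l L)) + mset r"
      using mset_concat_update[OF l1, of r] h l1 by simp
    show ?thesis
    proof (cases "l = i")
      case True
      then have "take l M = (take l L)[i-1 := r]" using tM by (simp add: list_update_beyond)
      then show ?thesis using a True h unfolding lowm_def by (simp add: ac_simps) (metis add_mset_add_single mset_subset_eq_add_left)
    next
      case False
      then have l2: "i < length ((take l L)[i-1:=r])" using h \<open>\<not> l \<le> i - 1\<close> by simp
      have b: "mset (concat (take l M)) + mset (L!i) = mset (concat ((take l L)[i-1:=r])) + mset (x # (L!i))"
        using mset_concat_update[OF l2, of "x # (L!i)"] h l2 tM by simp
      from a b have "lowm l M = lowm l L" unfolding lowm_def by (simp add: ac_simps)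
      then show ?thesis using False by simp
    qed
  qed
qed

lemma run_lowm: "runL w L = Some M \<Longrightarrow> lowm l M \<subseteq># lowm l L"
proof (induction w arbitrary: L)
  case (Cons i w)
  then obtain M1 where "stepL i L = Some M1" "runL w M1 = Some M" by (auto split: option.splits)
  then show ?case using Cons.IH step_lowm by (meson subset_mset.order_trans)
qed simp

lemma fresh_pad:
  fixes xs :: "nat list"
  assumes "distinct xs"
  shows "\<exists>P. length P = m \<and> (\<forall>j<m. length (P!j) = N) \<and> distinct (xs @ concat P)"
proof -
  define B where "B = Suc (Max (insert 0 (set xs)))"
  define P where "P = map (\<lambda>j. [B + j*N..<B + j*N + N]) [0..<m]"
  have c: "concat (map (\<lambda>j. [B + j*N..<B + j*N + N]) [0..<m']) = [B..<B+m'*N]" for m'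
  proof (induction m')
    case (Suc m')
    have e: "B + Suc m' * N = B + m'*N + N" by simp
    have "concat (map (\<lambda>j. [B + j*N..<B + j*N + N]) [0..<Suc m']) = [B..<B+m'*N] @ [B+m'*N..<B+m'*N+N]"
      using Suc.IH by simp
    also have "\<dots> = [B..<B + m'*N + N]" using upt_add_eq_append[of B "B+m'*N" N] by simp
    also have "\<dots> = [B..<B + Suc m' * N]" by (simp only: e)
    finally show ?case .
  qed simp
  have "\<forall>x\<in>set xs. x < B" unfolding B_def by (simp add: le_imp_less_Suc)
  then have "distinct (xs @ [B..<B+m*N])" using assms by auto
  moreover have "concat P = [B..<B+m*N]" unfolding P_def using c by simp
  moreover have "length P = m \<and> (\<forall>j<m. length (P!j) = N)" unfolding P_def by simp
  ultimately show ?thesis by metis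
qed


definition validL :: "nat \<Rightarrow> nat list list \<Rightarrow> bool" where
  "validL n L \<longleftrightarrow> length L = n \<and> distinct (concat L)"

lemma run_valid: "validL n L \<Longrightarrow> runL w L = Some M \<Longrightarrow> validL n M"
  unfolding validL_def using run_length[of w L M] run_mset[of w L M] mset_eq_imp_distinct_iff[of "concat M" "concat L"] by simp

lemma run_valid_back: "validL n M \<Longrightarrow> runL w L = Some M \<Longrightarrow> validL n L"
  unfolding validL_def using run_length[of w L M] run_mset[of w L M] mset_eq_imp_distinct_iff[of "concat M" "concat L"] by simp

lemma pad_valid: "validL n L \<Longrightarrow> length P = n \<Longrightarrow> distinct (concat L @ concat P) \<Longrightarrow> validL n (padL P L)"
  unfolding validL_def using mset_pad[of P L] mset_eq_imp_distinct_iff[of "concat (padL P L)" "concat L @ concat P"]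
  by simp

lemma pad_depth: "length P = length L \<Longrightarrow> \<forall>j<length L. length (P!j) = N \<Longrightarrow> \<forall>j<length (padL P L). N \<le> length (padL P L ! j)"
  by simp

lemma case_none:
  assumes V: "validL n L" and u: "runL u L = None" and v: "runL v L = Some Y" and su: "set u \<subseteq> {1..<n}"
  shows "\<exists>T X Y'. validL n T \<and> runL u T = Some X \<and> runL v T = Some Y' \<and> X \<noteq> Y'"
proof -
  have lenL: "length L = n" and dL: "distinct (concat L)" using V by (auto simp: validL_def)
  obtain P where P: "length P = n" "\<forall>j<n. length (P!j) = Suc (length u)" "distinct (concat L @ concat P)"
    using fresh_pad[OF dL, of n "Suc (length u)"] by blast
  define T where "T = padL P L"
  have VT: "validL n T" unfolding T_def using pad_valid[OF V P(1) P(3)] .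
  have lenY: "length Y = length L" using run_length[OF v] .
  have vT: "runL v T = Some (padL P Y)" unfolding T_def using run_pad[OF _ v] P(1) lenL by simp
  have "runL u T \<noteq> None"
    by (rule run_depth[of _ "length u"]) (use P lenL su in \<open>auto simp: T_def\<close>)
  then obtain Z where uT: "runL u T = Some Z" by auto
  have "Z \<noteq> padL P Y"
  proof
    assume ZY: "Z = padL P Y"
    obtain w1 i w2 X1 where dec: "u = w1 @ i # w2" "runL w1 L = Some X1" "stepL i X1 = None"
      using run_first_fail[OF u] by blast
    have i: "1 \<le> i" "i < n" using su dec(1) by auto
    have lenX1: "length X1 = n" using run_length[OF dec(2)] lenL by simp
    have X1e: "X1!(i-1) = []" using dec(3) i lenX1 by (auto simp: stepL_def split: list.splits)
    define PX1 where "PX1 = padL P X1"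
    have r1: "runL w1 T = Some PX1" unfolding T_def PX1_def using run_pad[OF _ dec(2)] P(1) lenL by simp
    have PX1i: "PX1!(i-1) = P!(i-1)" unfolding PX1_def using X1e lenX1 P(1) i by simp
    obtain p ps where pp: "P!(i-1) = p # ps" using P(2) i
      by (metis Suc_le_length_iff le_refl less_imp_diff_less)
    from uT dec(1) r1 have "runL (i#w2) PX1 = Some Z" by (simp add: run_append)
    then obtain Z1 where Z1: "stepL i PX1 = Some Z1" "runL w2 Z1 = Some Z"
      by (auto split: option.splits)
    have low1: "lowm i PX1 = lowm i Z1 + {#p#}" using step_lowm[OF Z1(1), of i] PX1i pp by simp
    have low2: "lowm i Z \<subseteq># lowm i Z1" using run_lowm[OF Z1(2)] .
    have VPX1: "validL n PX1" using run_valid[OF VT r1] .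
    then have "count (mset (concat PX1)) p \<le> 1" unfolding validL_def
      by (simp add: distinct_count_atmost_1)
    moreover have "count (lowm i PX1) p \<le> count (mset (concat PX1)) p"
      using mset_subset_eq_count[OF lowm_sub] .
    ultimately have "count (lowm i Z1) p = 0" using low1 by simp
    then have c0: "count (lowm i Z) p = 0" using mset_subset_eq_count[OF low2, of p] by simp
    have "p \<in> set ((padL P Y)!(i-1))" using P(1) lenY lenL i pp by simp
    moreover have "(padL P Y)!(i-1) \<in> set (take i (padL P Y))"
      using i P(1) lenY lenL by (auto simp: in_set_conv_nth intro!: exI[of _ "i-1"])
    ultimately have "p \<in># lowm i (padL P Y)" unfolding lowm_def by auto
    then show False using c0 ZY by (simp add: count_eq_zero_iff)
  qed
  then show ?thesis using VT uT vT by blast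
qed

lemma both_some:
  assumes V: "validL n L" and ne: "runL u L \<noteq> runL v L" and su: "set u \<subseteq> {1..<n}" and sv: "set v \<subseteq> {1..<n}"
  shows "\<exists>T X Y. validL n T \<and> runL u T = Some X \<and> runL v T = Some Y \<and> X \<noteq> Y"
proof (cases "runL u L")
  case None
  then obtain Y where "runL v L = Some Y" using ne by (cases "runL v L") auto
  then show ?thesis using case_none[OF V None _ su] by blast
next
  case (Some X)
  show ?thesis
  proof (cases "runL v L")
    case None
    then show ?thesis using case_none[OF V None Some sv] by metis
  next
    case (Some Y)
    then show ?thesis using V ne \<open>runL u L = Some X\<close> by auto
  qed
qed

theorem mainL:
  assumes sa: "set a \<subseteq> {1..<n}" and sb: "set b \<subseteq> {1..<n}"
    and su: "set u \<subseteq> {1..<n}" and sv: "set v \<subseteq> {1..<n}"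
    and H: "\<forall>L. validL n L \<longrightarrow> runL (a@u@b) L = runL (a@v@b) L"
  shows "\<forall>L. validL n L \<longrightarrow> runL u L = runL v L"
proof (rule ccontr)
  assume "\<not> ?thesis"
  then obtain L where "validL n L" "runL u L \<noteq> runL v L" by blast
  then obtain T X Y where T: "validL n T" "runL u T = Some X" "runL v T = Some Y" "X \<noteq> Y"
    using both_some su sv by blast
  have lenT: "length T = n" and dT: "distinct (concat T)" using T(1) by (auto simp: validL_def)
  have lenX: "length X = n" "length Y = n" using run_length T(2,3) lenT by auto
  define N where "N = length a + length b"
  obtain P where P: "length P = n" "\<forall>j<n. length (P!j) = N" "distinct (concat T @ concat P)"
    using fresh_pad[OF dT, of n N] by blast
  define S where "S = padL P T"
  have VS: "validL n S" unfolding S_def using pad_valid[OF T(1) P(1) P(3)] .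
  have uS: "runL u S = Some (padL P X)" unfolding S_def using run_pad[OF _ T(2)] P(1) lenT by simp
  have vS: "runL v S = Some (padL P Y)" unfolding S_def using run_pad[OF _ T(3)] P(1) lenT by simp
  have neP: "padL P X \<noteq> padL P Y" using pad_inj[of P X Y] P(1) lenX T(4) by auto
  obtain S0 where S0: "runL a S0 = Some S"
    by (rule exE[OF run_undo[of S N a]]) (use P lenT sa in \<open>auto simp: S_def N_def\<close>)
  have VS0: "validL n S0" using run_valid_back[OF VS S0] .
  have "runL b (padL P X) \<noteq> None"
    by (rule run_depth[of _ N]) (use P lenX sb in \<open>auto simp: N_def\<close>)
  then obtain BX where BX: "runL b (padL P X) = Some BX" by auto
  have "runL b (padL P Y) \<noteq> None"
    by (rule run_depth[of _ N]) (use P lenX sb in \<open>auto simp: N_def\<close>)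
  then obtain BY where BY: "runL b (padL P Y) = Some BY" by auto
  have "BX \<noteq> BY" using run_inj[OF BX] BY neP by auto
  moreover have "runL (a@u@b) S0 = Some BX" using S0 uS BX by (simp add: run_append)
  moreover have "runL (a@v@b) S0 = Some BY" using S0 vS BY by (simp add: run_append)
  ultimately show False using H VS0 by auto
qed


definition toL :: "nat list \<times> nat list list \<times> nat list \<Rightarrow> nat list list" where
  "toL st = (case st of (inp, ss, out) \<Rightarrow> inp # ss @ [rev out])"

definition fromL :: "nat list list \<Rightarrow> nat list \<times> nat list list \<times> nat list" where
  "fromL L = (hd L, butlast (tl L), rev (last L))"

lemma from_to[simp]: "fromL (toL st) = st"
  by (cases st) (auto simp: toL_def fromL_def)

lemma to_from: "2 \<le> length L \<Longrightarrow> toL (fromL L) = L"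
  by (cases L; cases "tl L" rule: rev_cases) (auto simp: toL_def fromL_def)

lemma act_None[simp]: "act k w None = None"
  by (induction w) auto

lemma move_i1_k0: "move 0 1 (Some (inp, [], out)) = map_option fromL (stepL 1 (toL (inp, [], out)))"
  by (cases inp) (auto simp: stepL_def toL_def fromL_def)

lemma move_i1: "length ss = k \<Longrightarrow> 1 \<le> k \<Longrightarrow> move k 1 (Some (inp, ss, out)) = map_option fromL (stepL 1 (toL (inp, ss, out)))"
  by (cases inp; cases ss) (auto simp: stepL_def toL_def fromL_def)

lemma move_mid0: "length ss = k \<Longrightarrow> Suc (Suc j) \<le> k \<Longrightarrow> move k (Suc (Suc j)) (Some (inp, ss, out)) = map_option fromL (stepL (Suc (Suc j)) (toL (inp, ss, out)))"
proof (cases "ss!j")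
  case Nil
  assume "length ss = k" "Suc (Suc j) \<le> k"
  then show ?thesis using Nil by (auto simp: stepL_def toL_def fromL_def nth_append Let_def)
next
  case (Cons x r)
  assume h: "length ss = k" "Suc (Suc j) \<le> k"
  have "(inp # ss @ [rev out])[Suc j := r, Suc (Suc j) := x # ((inp # ss @ [rev out]) ! Suc (Suc j))]
     = inp # (ss[j := r, Suc j := x # (ss ! Suc j)]) @ [rev out]"
    using h by (simp add: nth_append list_update_append)
  then show ?thesis using Cons h by (auto simp: stepL_def toL_def fromL_def nth_append Let_def)
qed

lemma move_mid: "length ss = k \<Longrightarrow> 2 \<le> i \<Longrightarrow> i \<le> k \<Longrightarrow> move k i (Some (inp, ss, out)) = map_option fromL (stepL i (toL (inp, ss, out)))"
  using move_mid0[of ss k "i-2" inp out] by (cases i; cases "i-1") auto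

lemma move_last: "length ss = k \<Longrightarrow> 2 \<le> k+1 \<Longrightarrow> move k (k+1) (Some (inp, ss, out)) = map_option fromL (stepL (k+1) (toL (inp, ss, out)))"
  apply (cases "ss!(k-1)")
   apply (auto simp: stepL_def toL_def fromL_def nth_append list_update_append Let_def split: nat.splits)
  done


lemma move_step: "length ss = k \<Longrightarrow> move k i (Some (inp, ss, out)) = map_option fromL (stepL i (toL (inp, ss, out)))"
proof -
  assume h: "length ss = k"
  consider "i < 1 \<or> k + 1 < i" | "i = 1" "k = 0" | "i = 1" "1 \<le> k" | "2 \<le> i" "i \<le> k" | "i = k+1" "2 \<le> k+1"
    by linarith
  then show ?thesis
  proof cases
    case 1 then show ?thesis using h by (auto simp: stepL_def toL_def)
  next
    case 2 then show ?thesis using h move_i1_k0 by simp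
  next
    case 3 then show ?thesis using h move_i1 by simp
  next
    case 4 then show ?thesis using h move_mid by simp
  next
    case 5 then show ?thesis using h move_last by simp
  qed
qed

lemma len_toL[simp]: "length (toL (inp, ss, out)) = length ss + 2"
  by (simp add: toL_def)

lemma act_run: "length ss = k \<Longrightarrow> act k w (Some (inp, ss, out)) = map_option fromL (runL w (toL (inp, ss, out)))"
proof (induction w arbitrary: inp ss out)
  case (Cons i w)
  show ?case
  proof (cases "stepL i (toL (inp, ss, out))")
    case None
    then show ?thesis using move_step[OF Cons.prems, of i inp out] by simp
  next
    case (Some M)
    have lM: "length M = k + 2" using step_length[OF Some] Cons.prems by simp
    obtain inp' ss' out' where f: "fromL M = (inp', ss', out')" by (cases "fromL M")
    have tf: "toL (inp', ss', out') = M" using to_from[of M] lM f by simp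
    have "length ss' = k" using lM tf[symmetric] by simp
    then show ?thesis using move_step[OF Cons.prems, of i inp out] Some Cons.IH[of ss' inp' out'] f tf by simp
  qed
qed simp

lemma distinct_toL: "distinct (concat (toL (inp, ss, out))) \<longleftrightarrow> distinct (inp @ concat ss @ out)"
  by (auto simp: toL_def)

lemma equiv_L:
  "equiv_words k x y \<longleftrightarrow> (\<forall>L. validL (k+2) L \<longrightarrow> runL x L = runL y L)"
proof
  assume E: "equiv_words k x y"
  show "\<forall>L. validL (k+2) L \<longrightarrow> runL x L = runL y L"
  proof (intro allI impI)
    fix L assume V: "validL (k+2) L"
    obtain inp ss out where f: "fromL L = (inp, ss, out)" by (cases "fromL L")
    have tf: "toL (inp, ss, out) = L" using to_from[of L] V f by (simp add: validL_def)
    have lss: "length ss = k" using V tf[symmetric] by (simp add: validL_def)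
    have "Some (inp, ss, out) \<in> states k" using V tf lss distinct_toL[of inp ss out]
      by (auto simp: states_def validL_def)
    then have "act k x (Some (inp, ss, out)) = act k y (Some (inp, ss, out))"
      using E by (simp add: equiv_words_def)
    then have eq: "map_option fromL (runL x L) = map_option fromL (runL y L)"
      using act_run[OF lss] tf by simp
    show "runL x L = runL y L"
    proof (cases "runL x L")
      case None then show ?thesis using eq by simp
    next
      case (Some X)
      then obtain Y where Y: "runL y L = Some Y" using eq by (cases "runL y L") auto
      have "fromL X = fromL Y" using eq Some Y by simp
      moreover have "length X = k+2" "length Y = k+2"
        using run_length Some Y V by (auto simp: validL_def)
      ultimately have "X = Y" by (metis to_from le_add2)
      then show ?thesis using Some Y by simp
    qed
  qed
next
  assume H: "\<forall>L. validL (k+2) L \<longrightarrow> runL x L = runL y L"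
  show "equiv_words k x y" unfolding equiv_words_def
  proof
    fix s assume "s \<in> states k"
    then show "act k x s = act k y s"
    proof (cases s)
      case (Some st)
      then obtain inp ss out where st: "s = Some (inp, ss, out)" "length ss = k" "distinct (inp @ concat ss @ out)"
        using \<open>s \<in> states k\<close> by (auto simp: states_def)
      have "validL (k+2) (toL (inp, ss, out))" using st distinct_toL by (simp add: validL_def)
      then show ?thesis using H act_run[OF st(2)] st(1) by simp
    qed simp
  qed
qed

theorem lemma3:
  fixes k :: nat and a b u v :: "nat list"
  assumes "set a \<subseteq> {1..k+1}" and "set b \<subseteq> {1..k+1}"
      and "set u \<subseteq> {1..k+1}" and "set v \<subseteq> {1..k+1}"
  shows "equiv_words k (a @ u @ b) (a @ v @ b) \<longleftrightarrow> equiv_words k u v"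
proof -
  have r: "{1..k+1} = {1..<k+2}" by auto
  show ?thesis
  proof
    assume "equiv_words k (a @ u @ b) (a @ v @ b)"
    then show "equiv_words k u v" unfolding equiv_L using mainL[of a "k+2" b u v] assms r by simp
  next
    assume "equiv_words k u v"
    then have H: "\<forall>L. validL (k+2) L \<longrightarrow> runL u L = runL v L" unfolding equiv_L .
    show "equiv_words k (a @ u @ b) (a @ v @ b)" unfolding equiv_L
    proof (intro allI impI)
      fix L assume V: "validL (k+2) L"
      show "runL (a @ u @ b) L = runL (a @ v @ b) L"
      proof (cases "runL a L")
        case (Some M)
        then have "runL u M = runL v M" using H run_valid[OF V Some] by simp
        then show ?thesis using Some by (simp add: run_append)
      qed (simp add: run_append)
    qed
  qed
qed

end
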